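(* Let $K$ be a field with $\operatorname{char}(K)\neq2$ and let $(C_1,C_0,s,t,e,k,(\tau,\psi))$ be a braided categorical Leibniz $K$-algebra. Then $(\ker(s),C_0,({}^e\cdot,\cdot^e),\partial_t,(\{-,-\}_\tau,\langle-,-\rangle_\psi))$ is a braided crossed module of Leibniz $K$-algebras, where for $a,b\in C_0$, $x\in\ker(s)$: $a\,{}^e\cdot\,x=[e(a),x]$, $x\cdot^e a=[x,e(a)]$, $\partial_t=t|_{\ker(s)}$, $\{a,b\}_\tau=\frac{e([a,b])-\tau_{a,b}}{2}$ and $\langle a,b\rangle_\psi=\frac{e([a,b])-\psi_{a,b}}{2}$.
   Context: A Leibniz $K$-algebra: bilinear bracket with $[x,[y,z]]=[[x,y],z]-[[x,z],y]$. Categorical Leibniz algebra $(C_1,C_0,s,t,e,k)$: Leibniz homomorphisms $s,t\colon C_1\to C_0$, $e\colon C_0\to C_1$, $k\colon C_1\times_{C_0}C_1=\{(x,y):t(x)=s(y)\}\to C_1$ forming an internal category ($se=te=\mathrm{Id}$, $sk(x,y)=s(x)$, $tk(x,y)=t(y)$, $k(es(x),x)=x=k(x,et(x))$, $k$ associative). Braiding on it: bilinear $\tau,\psi\colon C_0\times C_0\to C_1$ with, for all $a,b,c\in C_0$, $x,y\in C_1$: $s(\tau_{a,b})=s(\psi_{a,b})=[a,b]$, $t(\tau_{a,b})=t(\psi_{a,b})=-[a,b]$; $k([x,y],\tau_{t(x),t(y)})=k(\tau_{s(x),s(y)},-[x,y])$ and likewise for $\psi$; $\tau_{a,[b,c]}=\tau_{[a,b],c}-\tau_{[a,c],b}$;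 $\psi_{a,[b,c]}=\tau_{[a,b],c}-\psi_{[a,c],b}$; $\tau_{a,[b,c]}=\tau_{[a,b],c}-\psi_{[a,c],b}$; $\psi_{a,[b,c]}=\psi_{[a,b],c}-\psi_{[a,c],b}$. Leibniz action of $N$ on $M$: bilinear $\cdot_1\colon N\times M\to M$, $\cdot_2\colon M\times N\to M$ with $n\cdot_1[m,m']=[n\cdot_1m,m']-[n\cdot_1m',m]$; $[m,n\cdot_1m']=[m\cdot_2n,m']-[m,m']\cdot_2n$; $[m,m'\cdot_2n]=[m,m']\cdot_2n-[m\cdot_2n,m']$; $m\cdot_2[n,n']=(m\cdot_2n)\cdot_2n'-(m\cdot_2n')\cdot_2n$; $n\cdot_1(m\cdot_2n')=(n\cdot_1m)\cdot_2n'-[n,n']\cdot_1m$; $n\cdot_1(n'\cdot_1m)=[n,n']\cdot_1m-(n\cdot_1m)\cdot_2n'$. Crossed module $(M,N,(\cdot_1,\cdot_2),\partial)$: such an action with Leibniz homomorphism $\partial\colon M\to N$, $\partial(n\cdot_1m)=[n,\partial m]$, $\partial(m\cdot_2n)=[\partial m,n]$, $\partial(m)\cdot_1m'=[m,m']=m\cdot_2\partial(m')$. Braiding on it: bilinear $\{-,-\},\langle-,-\rangle\colon N\times N\to M$ with $\partial\{n,n'\}=[n,n']=\partial\langle n,n'\rangle$; $\{\partial m,\partial m'\}=[m,m']=\langle\partial m,\partial m'\rangle$; $\{\partial m,n\}=m\cdot_2n=\langle\partial m,n\rangle$; $\{n,\partial m\}=n\cdot_1m=\langle n,\partial m\rangle$;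 $\{n,[n',n'']\}=\{[n,n'],n''\}-\{[n,n''],n'\}$; $\langle n,[n',n'']\rangle=\{[n,n'],n''\}-\langle[n,n''],n'\rangle$; $\{n,[n',n'']\}=\{[n,n'],n''\}-\langle[n,n''],n'\rangle$; $\langle n,[n',n'']\rangle=\langle[n,n'],n''\rangle-\langle[n,n''],n'\rangle$. *)

theory Defs
  imports Complex_Main
begin

text \<open>Leibniz algebras, actions and crossed modules are
  relativised to carrier sets (subspaces), so that ker(s) can be used.\<close>

definition bilin_on ::
  "('k::field \<Rightarrow> 'a::ab_group_add \<Rightarrow> 'a) \<Rightarrow> 'a set \<Rightarrow>
   ('k \<Rightarrow> 'b::ab_group_add \<Rightarrow> 'b) \<Rightarrow> 'b set \<Rightarrow>
   ('k \<Rightarrow> 'c::ab_group_add \<Rightarrow> 'c) \<Rightarrow> 'c set \<Rightarrow> ('a \<Rightarrow> 'b \<Rightarrow> 'c) \<Rightarrow> bool" where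
  "bilin_on scA A scB B scC C f \<longleftrightarrow>
     (\<forall>x\<in>A. \<forall>y\<in>B. f x y \<in> C) \<and>
     (\<forall>x\<in>A. \<forall>x'\<in>A. \<forall>y\<in>B. f (x + x') y = f x y + f x' y) \<and>
     (\<forall>x\<in>A. \<forall>y\<in>B. \<forall>y'\<in>B. f x (y + y') = f x y + f x y') \<and>
     (\<forall>c. \<forall>x\<in>A. \<forall>y\<in>B. f (scA c x) y = scC c (f x y)) \<and>
     (\<forall>c. \<forall>x\<in>A. \<forall>y\<in>B. f x (scB c y) = scC c (f x y))"

definition leibniz_alg ::
  "('k::field \<Rightarrow> 'a::ab_group_add \<Rightarrow> 'a) \<Rightarrow> ('a \<Rightarrow> 'a \<Rightarrow> 'a) \<Rightarrow> 'a set \<Rightarrow> bool" where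
  "leibniz_alg sc br A \<longleftrightarrow>
     vector_space sc \<and> module.subspace sc A \<and> bilin_on sc A sc A sc A br \<and>
     (\<forall>x\<in>A. \<forall>y\<in>A. \<forall>z\<in>A. br x (br y z) = br (br x y) z - br (br x z) y)"

definition leibniz_hom ::
  "('k::field \<Rightarrow> 'a::ab_group_add \<Rightarrow> 'a) \<Rightarrow> ('a \<Rightarrow> 'a \<Rightarrow> 'a) \<Rightarrow> 'a set \<Rightarrow>
   ('k \<Rightarrow> 'b::ab_group_add \<Rightarrow> 'b) \<Rightarrow> ('b \<Rightarrow> 'b \<Rightarrow> 'b) \<Rightarrow> 'b set \<Rightarrow> ('a \<Rightarrow> 'b) \<Rightarrow> bool" where
  "leibniz_hom scA brA A scB brB B f \<longleftrightarrow>
     (\<forall>x\<in>A. f x \<in> B) \<and>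
     (\<forall>x\<in>A. \<forall>y\<in>A. f (x + y) = f x + f y) \<and>
     (\<forall>c. \<forall>x\<in>A. f (scA c x) = scB c (f x)) \<and>
     (\<forall>x\<in>A. \<forall>y\<in>A. f (brA x y) = brB (f x) (f y))"

text \<open>Categorical Leibniz algebra (C1, C0, s, t, e, k): C1 and C0 are the whole
  types; the composition k (curried) is a Leibniz homomorphism on the pullback
  C1 \<times>_C0 C1 = {(x,y). t x = s y} (a Leibniz algebra with componentwise
  operations), and the internal category axioms hold.\<close>
definition categorical_leibniz ::
  "('k::field \<Rightarrow> 'c::ab_group_add \<Rightarrow> 'c) \<Rightarrow> ('c \<Rightarrow> 'c \<Rightarrow> 'c) \<Rightarrow>
   ('k \<Rightarrow> 'd::ab_group_add \<Rightarrow> 'd) \<Rightarrow> ('d \<Rightarrow> 'd \<Rightarrow> 'd) \<Rightarrow>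
   ('c \<Rightarrow> 'd) \<Rightarrow> ('c \<Rightarrow> 'd) \<Rightarrow> ('d \<Rightarrow> 'c) \<Rightarrow> ('c \<Rightarrow> 'c \<Rightarrow> 'c) \<Rightarrow> bool" where
  "categorical_leibniz sc1 br1 sc0 br0 s t e k \<longleftrightarrow>
     leibniz_alg sc1 br1 UNIV \<and> leibniz_alg sc0 br0 UNIV \<and>
     leibniz_hom sc1 br1 UNIV sc0 br0 UNIV s \<and>
     leibniz_hom sc1 br1 UNIV sc0 br0 UNIV t \<and>
     leibniz_hom sc0 br0 UNIV sc1 br1 UNIV e \<and>
     (\<forall>x y x' y'. t x = s y \<longrightarrow> t x' = s y' \<longrightarrow>
        k (x + x') (y + y') = k x y + k x' y' \<and>
        k (br1 x x') (br1 y y') = br1 (k x y) (k x' y')) \<and>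
     (\<forall>c x y. t x = s y \<longrightarrow> k (sc1 c x) (sc1 c y) = sc1 c (k x y)) \<and>
     (\<forall>a. s (e a) = a \<and> t (e a) = a) \<and>
     (\<forall>x y. t x = s y \<longrightarrow> s (k x y) = s x \<and> t (k x y) = t y) \<and>
     (\<forall>x. k (e (s x)) x = x \<and> k x (e (t x)) = x) \<and>
     (\<forall>x y z. t x = s y \<longrightarrow> t y = s z \<longrightarrow> k (k x y) z = k x (k y z))"

definition cat_braiding ::
  "('k::field \<Rightarrow> 'c::ab_group_add \<Rightarrow> 'c) \<Rightarrow> ('c \<Rightarrow> 'c \<Rightarrow> 'c) \<Rightarrow>
   ('k \<Rightarrow> 'd::ab_group_add \<Rightarrow> 'd) \<Rightarrow> ('d \<Rightarrow> 'd \<Rightarrow> 'd) \<Rightarrow>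
   ('c \<Rightarrow> 'd) \<Rightarrow> ('c \<Rightarrow> 'd) \<Rightarrow> ('c \<Rightarrow> 'c \<Rightarrow> 'c) \<Rightarrow>
   ('d \<Rightarrow> 'd \<Rightarrow> 'c) \<Rightarrow> ('d \<Rightarrow> 'd \<Rightarrow> 'c) \<Rightarrow> bool" where
  "cat_braiding sc1 br1 sc0 br0 s t k \<tau> \<psi> \<longleftrightarrow>
     bilin_on sc0 UNIV sc0 UNIV sc1 UNIV \<tau> \<and> bilin_on sc0 UNIV sc0 UNIV sc1 UNIV \<psi> \<and>
     (\<forall>a b. s (\<tau> a b) = br0 a b \<and> s (\<psi> a b) = br0 a b \<and>
            t (\<tau> a b) = - br0 a b \<and> t (\<psi> a b) = - br0 a b) \<and>
     (\<forall>x y. k (br1 x y) (\<tau> (t x) (t y)) = k (\<tau> (s x) (s y)) (- br1 x y) \<and>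
            k (br1 x y) (\<psi> (t x) (t y)) = k (\<psi> (s x) (s y)) (- br1 x y)) \<and>
     (\<forall>a b c. \<tau> a (br0 b c) = \<tau> (br0 a b) c - \<tau> (br0 a c) b \<and>
              \<psi> a (br0 b c) = \<tau> (br0 a b) c - \<psi> (br0 a c) b \<and>
              \<tau> a (br0 b c) = \<tau> (br0 a b) c - \<psi> (br0 a c) b \<and>
              \<psi> a (br0 b c) = \<psi> (br0 a b) c - \<psi> (br0 a c) b)"

definition leibniz_action ::
  "('k::field \<Rightarrow> 'm::ab_group_add \<Rightarrow> 'm) \<Rightarrow> ('m \<Rightarrow> 'm \<Rightarrow> 'm) \<Rightarrow> 'm set \<Rightarrow>
   ('k \<Rightarrow> 'n::ab_group_add \<Rightarrow> 'n) \<Rightarrow> ('n \<Rightarrow> 'n \<Rightarrow> 'n) \<Rightarrow> 'n set \<Rightarrow>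
   ('n \<Rightarrow> 'm \<Rightarrow> 'm) \<Rightarrow> ('m \<Rightarrow> 'n \<Rightarrow> 'm) \<Rightarrow> bool" where
  "leibniz_action scM brM M scN brN N act1 act2 \<longleftrightarrow>
     bilin_on scN N scM M scM M act1 \<and> bilin_on scM M scN N scM M act2 \<and>
     (\<forall>n\<in>N. \<forall>m\<in>M. \<forall>m'\<in>M. act1 n (brM m m') = brM (act1 n m) m' - brM (act1 n m') m) \<and>
     (\<forall>n\<in>N. \<forall>m\<in>M. \<forall>m'\<in>M. brM m (act1 n m') = brM (act2 m n) m' - act2 (brM m m') n) \<and>
     (\<forall>n\<in>N. \<forall>m\<in>M. \<forall>m'\<in>M. brM m (act2 m' n) = act2 (brM m m') n - brM (act2 m n) m') \<and>
     (\<forall>m\<in>M. \<forall>n\<in>N. \<forall>n'\<in>N. act2 m (brN n n') = act2 (act2 m n) n' - act2 (act2 m n') n) \<and>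
     (\<forall>m\<in>M. \<forall>n\<in>N. \<forall>n'\<in>N. act1 n (act2 m n') = act2 (act1 n m) n' - act1 (brN n n') m) \<and>
     (\<forall>m\<in>M. \<forall>n\<in>N. \<forall>n'\<in>N. act1 n (act1 n' m) = act1 (brN n n') m - act2 (act1 n m) n')"

definition crossed_module ::
  "('k::field \<Rightarrow> 'm::ab_group_add \<Rightarrow> 'm) \<Rightarrow> ('m \<Rightarrow> 'm \<Rightarrow> 'm) \<Rightarrow> 'm set \<Rightarrow>
   ('k \<Rightarrow> 'n::ab_group_add \<Rightarrow> 'n) \<Rightarrow> ('n \<Rightarrow> 'n \<Rightarrow> 'n) \<Rightarrow> 'n set \<Rightarrow>
   ('n \<Rightarrow> 'm \<Rightarrow> 'm) \<Rightarrow> ('m \<Rightarrow> 'n \<Rightarrow> 'm) \<Rightarrow> ('m \<Rightarrow> 'n) \<Rightarrow> bool" where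
  "crossed_module scM brM M scN brN N act1 act2 d \<longleftrightarrow>
     leibniz_alg scM brM M \<and> leibniz_alg scN brN N \<and>
     leibniz_action scM brM M scN brN N act1 act2 \<and>
     leibniz_hom scM brM M scN brN N d \<and>
     (\<forall>n\<in>N. \<forall>m\<in>M. d (act1 n m) = brN n (d m) \<and> d (act2 m n) = brN (d m) n) \<and>
     (\<forall>m\<in>M. \<forall>m'\<in>M. act1 (d m) m' = brM m m' \<and> brM m m' = act2 m (d m'))"

definition braided_crossed_module ::
  "('k::field \<Rightarrow> 'm::ab_group_add \<Rightarrow> 'm) \<Rightarrow> ('m \<Rightarrow> 'm \<Rightarrow> 'm) \<Rightarrow> 'm set \<Rightarrow>
   ('k \<Rightarrow> 'n::ab_group_add \<Rightarrow> 'n) \<Rightarrow> ('n \<Rightarrow> 'n \<Rightarrow> 'n) \<Rightarrow> 'n set \<Rightarrow>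
   ('n \<Rightarrow> 'm \<Rightarrow> 'm) \<Rightarrow> ('m \<Rightarrow> 'n \<Rightarrow> 'm) \<Rightarrow> ('m \<Rightarrow> 'n) \<Rightarrow>
   ('n \<Rightarrow> 'n \<Rightarrow> 'm) \<Rightarrow> ('n \<Rightarrow> 'n \<Rightarrow> 'm) \<Rightarrow> bool" where
  "braided_crossed_module scM brM M scN brN N act1 act2 d br ang \<longleftrightarrow>
     crossed_module scM brM M scN brN N act1 act2 d \<and>
     bilin_on scN N scN N scM M br \<and> bilin_on scN N scN N scM M ang \<and>
     (\<forall>n\<in>N. \<forall>n'\<in>N. d (br n n') = brN n n' \<and> brN n n' = d (ang n n')) \<and>
     (\<forall>m\<in>M. \<forall>m'\<in>M. br (d m) (d m') = brM m m' \<and> brM m m' = ang (d m) (d m')) \<and>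
     (\<forall>m\<in>M. \<forall>n\<in>N. br (d m) n = act2 m n \<and> act2 m n = ang (d m) n) \<and>
     (\<forall>m\<in>M. \<forall>n\<in>N. br n (d m) = act1 n m \<and> act1 n m = ang n (d m)) \<and>
     (\<forall>n\<in>N. \<forall>n'\<in>N. \<forall>n''\<in>N.
        br n (brN n' n'') = br (brN n n') n'' - br (brN n n'') n' \<and>
        ang n (brN n' n'') = br (brN n n') n'' - ang (brN n n'') n' \<and>
        br n (brN n' n'') = br (brN n n') n'' - ang (brN n n'') n' \<and>
        ang n (brN n' n'') = ang (brN n n') n'' - ang (brN n n'') n')"

end

theory Submission
  imports Defs
begin

lemma addf:
  fixes f :: "'a::ab_group_add \<Rightarrow> 'b::ab_group_add"
  assumes "\<And>x y. f (x + y) = f x + f y"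
  shows "f 0 = 0" "f (- x) = - f x" "f (x - y) = f x - f y"
proof -
  interpret additive f by (unfold_locales) (rule assms)
  show "f 0 = 0" "f (- x) = - f x" "f (x - y) = f x - f y" by (simp_all add: zero minus diff)
qed

theorem mainTheorem4:
  fixes sc1 :: "'k::field \<Rightarrow> 'c::ab_group_add \<Rightarrow> 'c" and br1 :: "'c \<Rightarrow> 'c \<Rightarrow> 'c"
    and sc0 :: "'k \<Rightarrow> 'd::ab_group_add \<Rightarrow> 'd" and br0 :: "'d \<Rightarrow> 'd \<Rightarrow> 'd"
    and s t :: "'c \<Rightarrow> 'd" and e :: "'d \<Rightarrow> 'c" and k :: "'c \<Rightarrow> 'c \<Rightarrow> 'c"
    and \<tau> \<psi> :: "'d \<Rightarrow> 'd \<Rightarrow> 'c"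
  assumes "CHAR('k) \<noteq> 2"
    and "categorical_leibniz sc1 br1 sc0 br0 s t e k"
    and "cat_braiding sc1 br1 sc0 br0 s t k \<tau> \<psi>"
  shows "braided_crossed_module sc1 br1 {x. s x = 0} sc0 br0 UNIV
           (\<lambda>a x. br1 (e a) x) (\<lambda>x a. br1 x (e a)) t
           (\<lambda>a b. sc1 (inverse 2) (e (br0 a b) - \<tau> a b))
           (\<lambda>a b. sc1 (inverse 2) (e (br0 a b) - \<psi> a b))"
proof -
  note CL = assms(2)[unfolded categorical_leibniz_def leibniz_alg_def leibniz_hom_def bilin_on_def]
  note CB = assms(3)[unfolded cat_braiding_def bilin_on_def, unfolded ball_UNIV]
  have vs1: "vector_space sc1" and vs0: "vector_space sc0" using CL by auto
  have L0: "leibniz_alg sc0 br0 UNIV" using assms(2) unfolding categorical_leibniz_def by auto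
  interpret V1: vector_space sc1 by (rule vs1)
  interpret V0: vector_space sc0 by (rule vs0)
  have b1a1: "\<And>x x' y. br1 (x+x') y = br1 x y + br1 x' y"
   and b1a2: "\<And>x y y'. br1 x (y+y') = br1 x y + br1 x y'"
   and b1s1: "\<And>c x y. br1 (sc1 c x) y = sc1 c (br1 x y)"
   and b1s2: "\<And>c x y. br1 x (sc1 c y) = sc1 c (br1 x y)"
   and leib1: "\<And>x y z. br1 x (br1 y z) = br1 (br1 x y) z - br1 (br1 x z) y"
    using CL by auto
  have b0a1: "\<And>x x' y. br0 (x+x') y = br0 x y + br0 x' y"
   and b0a2: "\<And>x y y'. br0 x (y+y') = br0 x y + br0 x y'"
   and b0s1: "\<And>c x y. br0 (sc0 c x) y = sc0 c (br0 x y)"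
   and b0s2: "\<And>c x y. br0 x (sc0 c y) = sc0 c (br0 x y)"
   and leib0: "\<And>x y z. br0 x (br0 y z) = br0 (br0 x y) z - br0 (br0 x z) y"
    using CL by auto
  have sa: "\<And>x y. s (x+y) = s x + s y" and ss: "\<And>c x. s (sc1 c x) = sc0 c (s x)"
   and sb: "\<And>x y. s (br1 x y) = br0 (s x) (s y)"
   and ta: "\<And>x y. t (x+y) = t x + t y" and ts: "\<And>c x. t (sc1 c x) = sc0 c (t x)"
   and tb: "\<And>x y. t (br1 x y) = br0 (t x) (t y)"
   and ea: "\<And>x y. e (x+y) = e x + e y" and es: "\<And>c x. e (sc0 c x) = sc1 c (e x)"
   and eb: "\<And>x y. e (br0 x y) = br1 (e x) (e y)"
    using CL by auto
  have ka: "\<And>x y x' y'. t x = s y \<Longrightarrow> t x' = s y' \<Longrightarrow> k (x + x') (y + y') = k x y + k x' y'"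
   and kb: "\<And>x y x' y'. t x = s y \<Longrightarrow> t x' = s y' \<Longrightarrow> k (br1 x x') (br1 y y') = br1 (k x y) (k x' y')"
   and se: "\<And>a. s (e a) = a" and te: "\<And>a. t (e a) = a"
   and kl: "\<And>x. k (e (s x)) x = x" and kr: "\<And>x. k x (e (t x)) = x"
    using CL by auto
  have s0: "s 0 = 0" and t0: "t 0 = 0" and e0: "e 0 = 0"
    using addf(1)[of s, OF sa] addf(1)[of t, OF ta] addf(1)[of e, OF ea] by auto
  have sd: "\<And>x y. s (x - y) = s x - s y" using addf(3)[of s, OF sa] by blast
  have td: "\<And>x y. t (x - y) = t x - t y" using addf(3)[of t, OF ta] by blast
  have ed: "\<And>x y. e (x - y) = e x - e y" using addf(3)[of e, OF ea] by blast
  have sn: "\<And>x. s (- x) = - s x" using addf(2)[of s, OF sa] by blast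
  have b1z1: "\<And>y. br1 0 y = 0" using addf(1)[of "\<lambda>x. br1 x y" for y] b1a1 by blast
  have b1z2: "\<And>x. br1 x 0 = 0" using addf(1)[of "\<lambda>y. br1 x y" for x] b1a2 by blast
  have b0z1: "\<And>y. br0 0 y = 0" using addf(1)[of "\<lambda>x. br0 x y" for y] b0a1 by blast
  have b0z2: "\<And>x. br0 x 0 = 0" using addf(1)[of "\<lambda>y. br0 x y" for x] b0a2 by blast
  have b1d1: "\<And>x x' y. br1 (x - x') y = br1 x y - br1 x' y" using addf(3)[of "\<lambda>x. br1 x y" for y] b1a1 by blast
  have b1d2: "\<And>x y y'. br1 x (y - y') = br1 x y - br1 x y'" using addf(3)[of "\<lambda>y. br1 x y" for x] b1a2 by blast
  have b1n1: "\<And>x y. br1 (- x) y = - br1 x y" using addf(2)[of "\<lambda>x. br1 x y" for y] b1a1 by blast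
  have b1n2: "\<And>x y. br1 x (- y) = - br1 x y" using addf(2)[of "\<lambda>y. br1 x y" for x] b1a2 by blast
  have k00: "k 0 0 = 0"
  proof -
    have "k (0+0) (0+0) = k 0 0 + k 0 0" using ka[of 0 0 0 0] s0 t0 by simp
    then show ?thesis by simp
  qed
  have k0: "\<And>v. s v = 0 \<Longrightarrow> k 0 v = v" using kl e0 by metis
  have kform: "\<And>x y. t x = s y \<Longrightarrow> k x y = x + y - e (t x)"
  proof -
    fix x y assume h: "t x = s y"
    have "k (x + 0) (e (t x) + (y - e (t x))) = k x (e (t x)) + k 0 (y - e (t x))"
      by (rule ka) (simp_all add: se t0 sd h)
    also have "\<dots> = x + (y - e (t x))"
    proof -
      have "s (y - e (t x)) = 0" by (simp add: sd se h)
      then show ?thesis using kr[of x] k0[of "y - e (t x)"] by simp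
    qed
    finally show "k x y = x + y - e (t x)" by simp
  qed
  have ts_s: "\<And>u v. t u = 0 \<Longrightarrow> s v = 0 \<Longrightarrow> br1 u v = 0"
  proof -
    fix u v assume h: "t u = 0" "s v = 0"
    have "br1 u v = br1 (k u 0) (k 0 v)" using kform[of u 0] kform[of 0 v] h s0 t0 e0 by simp
    also have "\<dots> = k (br1 u 0) (br1 0 v)" using kb[of u 0 0 v] h s0 t0 by simp
    finally show "br1 u v = 0" using b1z1 b1z2 k00 by simp
  qed
  have st_s: "\<And>u v. t u = 0 \<Longrightarrow> s v = 0 \<Longrightarrow> br1 v u = 0"
  proof -
    fix u v assume h: "t u = 0" "s v = 0"
    have "br1 v u = br1 (k 0 v) (k u 0)" using kform[of u 0] kform[of 0 v] h s0 t0 e0 by simp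
    also have "\<dots> = k (br1 0 u) (br1 v 0)" using kb[of 0 v u 0] h s0 t0 by simp
    finally show "br1 v u = 0" using b1z1 b1z2 k00 by simp
  qed
  have two: "(2::'k) \<noteq> 0"
  proof
    assume "(2::'k) = 0"
    then have "of_nat 2 = (0::'k)" by simp
    then have "CHAR('k) dvd 2" by (simp only: of_nat_eq_0_iff_char_dvd)
    then have c2: "CHAR('k) dvd 2" .
    have "CHAR('k) \<noteq> 0"
    proof
      assume "CHAR('k) = 0"
      with c2 show False by simp
    qed
    moreover have "CHAR('k) \<le> 2" using c2 by (rule dvd_imp_le) simp
    moreover have "CHAR('k) \<noteq> 1" using CHAR_not_1 by simp
    ultimately show False using assms(1) by arith
  qed
  have half: "\<And>x. sc1 (inverse 2) (x + x) = x"
  proof -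
    fix x
    have "x + x = sc1 2 x" using V1.scale_left_distrib[of 1 1 x] by (simp add: one_add_one)
    then show "sc1 (inverse 2) (x + x) = x" using two by simp
  qed
  have ta1: "\<And>a a' b. \<tau> (a + a') b = \<tau> a b + \<tau> a' b"
   and ta2: "\<And>a b b'. \<tau> a (b + b') = \<tau> a b + \<tau> a b'"
   and ts1: "\<And>c a b. \<tau> (sc0 c a) b = sc1 c (\<tau> a b)"
   and ts2: "\<And>c a b. \<tau> a (sc0 c b) = sc1 c (\<tau> a b)"
   and pa1: "\<And>a a' b. \<psi> (a + a') b = \<psi> a b + \<psi> a' b"
   and pa2: "\<And>a b b'. \<psi> a (b + b') = \<psi> a b + \<psi> a b'"
   and ps1: "\<And>c a b. \<psi> (sc0 c a) b = sc1 c (\<psi> a b)"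
   and ps2: "\<And>c a b. \<psi> a (sc0 c b) = sc1 c (\<psi> a b)"
   and stau: "\<And>a b. s (\<tau> a b) = br0 a b" and spsi: "\<And>a b. s (\<psi> a b) = br0 a b"
   and ttau: "\<And>a b. t (\<tau> a b) = - br0 a b" and tpsi: "\<And>a b. t (\<psi> a b) = - br0 a b"
   and ntau: "\<And>x y. k (br1 x y) (\<tau> (t x) (t y)) = k (\<tau> (s x) (s y)) (- br1 x y)"
   and npsi: "\<And>x y. k (br1 x y) (\<psi> (t x) (t y)) = k (\<psi> (s x) (s y)) (- br1 x y)"
    using CB by (auto simp only: UNIV_I)
  note I = CB[THEN conjunct2, THEN conjunct2, THEN conjunct2, THEN conjunct2]
  have i1: "\<And>a b c. \<tau> a (br0 b c) = \<tau> (br0 a b) c - \<tau> (br0 a c) b" using I by blast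
  have i2: "\<And>a b c. \<psi> a (br0 b c) = \<tau> (br0 a b) c - \<psi> (br0 a c) b" using I by blast
  have i3: "\<And>a b c. \<tau> a (br0 b c) = \<tau> (br0 a b) c - \<psi> (br0 a c) b" using I by blast
  have i4: "\<And>a b c. \<psi> a (br0 b c) = \<psi> (br0 a b) c - \<psi> (br0 a c) b" using I by blast
  have tz: "\<And>a. \<tau> 0 a = 0 \<and> \<tau> a 0 = 0" "\<And>a. \<psi> 0 a = 0 \<and> \<psi> a 0 = 0"
    using addf(1)[of "\<lambda>x. \<tau> x b" for b] addf(1)[of "\<lambda>x. \<tau> b x" for b]
      addf(1)[of "\<lambda>x. \<psi> x b" for b] addf(1)[of "\<lambda>x. \<psi> b x" for b]
      ta1 ta2 pa1 pa2 by blast+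
  have gen: "\<And>\<phi> x y. (\<forall>a b. s (\<phi> a b) = br0 a b) \<Longrightarrow> (\<forall>a. \<phi> 0 a = 0 \<and> \<phi> a 0 = 0) \<Longrightarrow>
      k (br1 x y) (\<phi> (t x) (t y)) = k (\<phi> (s x) (s y)) (- br1 x y) \<Longrightarrow> s x = 0 \<or> s y = 0 \<Longrightarrow>
      e (br0 (t x) (t y)) - \<phi> (t x) (t y) = br1 x y + br1 x y"
  proof -
    fix \<phi> x y
    assume h1: "\<forall>a b. s (\<phi> a b) = br0 a b" and h2: "\<forall>a. \<phi> 0 a = 0 \<and> \<phi> a 0 = 0"
      and h3: "k (br1 x y) (\<phi> (t x) (t y)) = k (\<phi> (s x) (s y)) (- br1 x y)" and h4: "s x = 0 \<or> s y = 0"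
    have z: "\<phi> (s x) (s y) = 0" using h2 h4 by auto
    have sz: "s (br1 x y) = 0" using h4 sb b0z1 b0z2 by auto
    have "k (br1 x y) (\<phi> (t x) (t y)) = br1 x y + \<phi> (t x) (t y) - e (br0 (t x) (t y))"
      using kform[of "br1 x y" "\<phi> (t x) (t y)"] h1 tb by simp
    moreover have "k (\<phi> (s x) (s y)) (- br1 x y) = - br1 x y"
      using z k0[of "- br1 x y"] sz sn by simp
    ultimately have "br1 x y + \<phi> (t x) (t y) - e (br0 (t x) (t y)) = - br1 x y" using h3 by simp
    then show "e (br0 (t x) (t y)) - \<phi> (t x) (t y) = br1 x y + br1 x y"
      by (simp add: algebra_simps eq_neg_iff_add_eq_0)
  qed
  have gt: "\<And>x y. s x = 0 \<or> s y = 0 \<Longrightarrow> sc1 (inverse 2) (e (br0 (t x) (t y)) - \<tau> (t x) (t y)) = br1 x y"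
    using gen[of \<tau>] stau tz ntau half by metis
  have gp: "\<And>x y. s x = 0 \<or> s y = 0 \<Longrightarrow> sc1 (inverse 2) (e (br0 (t x) (t y)) - \<psi> (t x) (t y)) = br1 x y"
    using gen[of \<psi>] spsi tz npsi half by metis
  have cm1: "\<And>m m'. s m = 0 \<Longrightarrow> s m' = 0 \<Longrightarrow> br1 (e (t m)) m' = br1 m m'"
  proof -
    fix m m' assume h: "s m = 0" "s m' = 0"
    have "br1 (m - e (t m)) m' = 0" by (rule ts_s) (simp_all add: td te h)
    then show "br1 (e (t m)) m' = br1 m m'" by (simp add: b1d1)
  qed
  have cm2: "\<And>m m'. s m = 0 \<Longrightarrow> s m' = 0 \<Longrightarrow> br1 m (e (t m')) = br1 m m'"
  proof -
    fix m m' assume h: "s m = 0" "s m' = 0"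
    have "br1 m (m' - e (t m')) = 0" by (rule st_s) (simp_all add: td te h)
    then show "br1 m (e (t m')) = br1 m m'" by (simp add: b1d2)
  qed
  have hh: "(1/2::'k) + 1/2 = 1" using two by (simp add: field_simps)
  have half0: "\<And>x. sc0 (1/2) x + sc0 (1/2) x = x"
    using V0.scale_left_distrib[of "1/2" "1/2", symmetric] hh by simp
  have half1: "\<And>x. sc1 (1/2) x + sc1 (1/2) x = x"
    using V1.scale_left_distrib[of "1/2" "1/2", symmetric] hh by simp
  have ih: "inverse (2::'k) = 1/2" by simp
  have gt1: "\<And>m m'. s m = 0 \<Longrightarrow> s m' = 0 \<Longrightarrow> sc1 (1/2) (br1 (e (t m)) (e (t m'))) - sc1 (1/2) (\<tau> (t m) (t m')) = br1 m m'"
    using gt by (simp add: ih eb V1.scale_right_diff_distrib)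
  have gt2: "\<And>m n. s m = 0 \<Longrightarrow> sc1 (1/2) (br1 (e (t m)) (e n)) - sc1 (1/2) (\<tau> (t m) n) = br1 m (e n)"
    using gt[of _ "e n" for n] by (simp add: ih eb V1.scale_right_diff_distrib te)
  have gt3: "\<And>m n. s m = 0 \<Longrightarrow> sc1 (1/2) (br1 (e n) (e (t m))) - sc1 (1/2) (\<tau> n (t m)) = br1 (e n) m"
    using gt[of "e n" for n] by (simp add: ih eb V1.scale_right_diff_distrib te)
  have gp1: "\<And>m m'. s m = 0 \<Longrightarrow> s m' = 0 \<Longrightarrow> sc1 (1/2) (br1 (e (t m)) (e (t m'))) - sc1 (1/2) (\<psi> (t m) (t m')) = br1 m m'"
    using gp by (simp add: ih eb V1.scale_right_diff_distrib)
  have gp2: "\<And>m n. s m = 0 \<Longrightarrow> sc1 (1/2) (br1 (e (t m)) (e n)) - sc1 (1/2) (\<psi> (t m) n) = br1 m (e n)"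
    using gp[of _ "e n" for n] by (simp add: ih eb V1.scale_right_diff_distrib te)
  have gp3: "\<And>m n. s m = 0 \<Longrightarrow> sc1 (1/2) (br1 (e n) (e (t m))) - sc1 (1/2) (\<psi> n (t m)) = br1 (e n) m"
    using gp[of "e n" for n] by (simp add: ih eb V1.scale_right_diff_distrib te)
  show ?thesis
    unfolding braided_crossed_module_def crossed_module_def leibniz_action_def leibniz_alg_def
      leibniz_hom_def bilin_on_def V1.subspace_def
    apply (intro conjI ballI allI)
    apply (simp_all add: vs0 vs1 s0 sa ss sb b1z1 b1z2 b0z1 b0z2 ta tb ts eb se te cm1 cm2 gt gp b1a1 b1a2 b1s1 b1s2 b0a1 b0a2 b0s1 b0s2 ea es ed sd td ta1 ta2 ts1 ts2 pa1 pa2 ps1 ps2 stau spsi ttau tpsi V1.scale_right_distrib V1.scale_right_diff_distrib)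
    apply (simp_all add: leib1 leib0 half0 half1 gt1 gt2 gt3 gp1 gp2 gp3)
    apply (simp add: cm1)
    apply (simp add: cm1)
    apply (simp add: i1 V1.scale_right_diff_distrib algebra_simps)
    apply (simp add: i2 V1.scale_right_diff_distrib algebra_simps)
    apply (simp add: i3 V1.scale_right_diff_distrib algebra_simps)
    apply (simp add: i4 V1.scale_right_diff_distrib algebra_simps)
    done
qed

end
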